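(* Let $A$ be a unital C*-algebra, $\mathcal H$ a Hilbert $A$-module and $\{x_j : j\in\mathbb J\}$ a standard frame of $\mathcal H$. Suppose $\{y_j : j\in\mathbb J\}$ and $\{z_j : j\in\mathbb J\}$ are two standard alternate dual frames of $\{x_j\}$ which are connected by an invertible adjointable bounded $A$-linear operator $T$ on $\mathcal H$ via $z_j=T(y_j)$ for all $j\in\mathbb J$. Then $T=\mathrm{id}_{\mathcal H}$. In other words, two different standard alternate dual frames of a given standard frame are neither similar nor unitarily equivalent.
   Context: A (left) Hilbert $A$-module is a left $A$-module $\mathcal H$ with an $A$-valued inner product $\langle\cdot,\cdot\rangle$, $A$-linear in the first argument, with $\langle x,y\rangle=\langle y,x\rangle^*$, $\langle x,x\rangle\ge0$ and $=0$ only for $x=0$, complete in $\|x\|=\|\langle x,x\rangle\|^{1/2}$. A sequence $\{x_j:j\in\mathbb J\}$ ($\mathbb J$ finite or countable) is a frame if there are $C,D>0$ with $C\langle x,x\rangle\le\sum_j\langle x,x_j\rangle\langle x_j,x\rangle\le D\langle x,x\rangle$ for all $x$; standard if this series converges in norm for all $x$. A standard alternate dual frame of $\{x_j\}$ is a standard frame $\{y_j:j\in\mathbb J\}$ of $\mathcal H$ with $x=\sum_j\langle x,y_j\rangle x_j$ for every $x\in\mathcal H$. Two frames $\{y_j\},\{z_j\}$ are similar if $z_j=T(y_j)$ for all $j$ for some invertible adjointable bounded $A$-linear $T$, and unitarily equivalent if $T$ can be taken unitary. *)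

theory Defs
  imports "HOL-Analysis.Analysis"
begin

class cstar_algebra = real_normed_algebra_1 + banach +
  fixes scaleC :: "complex \<Rightarrow> 'a \<Rightarrow> 'a"
    and invol :: "'a \<Rightarrow> 'a"
  assumes scaleC_of_real: "scaleC (complex_of_real r) a = scaleR r a"
    and scaleC_add_left: "scaleC (c + d) a = scaleC c a + scaleC d a"
    and scaleC_add_right: "scaleC c (a + b) = scaleC c a + scaleC c b"
    and scaleC_scaleC: "scaleC c (scaleC d a) = scaleC (c * d) a"
    and scaleC_one: "scaleC 1 a = a"
    and scaleC_mult_left: "scaleC c (a * b) = scaleC c a * b"
    and scaleC_mult_right: "scaleC c (a * b) = a * scaleC c b"
    and norm_scaleC: "norm (scaleC c a) = cmod c * norm a"
    and invol_invol: "invol (invol a) = a"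
    and invol_add: "invol (a + b) = invol a + invol b"
    and invol_mult: "invol (a * b) = invol b * invol a"
    and invol_scaleC: "invol (scaleC c a) = scaleC (cnj c) (invol a)"
    and cstar_identity: "norm (invol a * a) = (norm a)\<^sup>2"

definition cpos :: "'a::cstar_algebra \<Rightarrow> bool" where
  "cpos a \<longleftrightarrow> (\<exists>b. a = invol b * b)"

definition cle :: "'a::cstar_algebra \<Rightarrow> 'a \<Rightarrow> bool" where
  "cle a b \<longleftrightarrow> cpos (b - a)"

definition hnorm :: "('h \<Rightarrow> 'h \<Rightarrow> 'a::cstar_algebra) \<Rightarrow> 'h \<Rightarrow> real" where
  "hnorm ip x = sqrt (norm (ip x x))"

definition hilbert_module ::
  "('a::cstar_algebra \<Rightarrow> 'h::ab_group_add \<Rightarrow> 'h) \<Rightarrow> ('h \<Rightarrow> 'h \<Rightarrow> 'a) \<Rightarrow> bool" where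
  "hilbert_module act ip \<longleftrightarrow>
     (\<forall>a b x. act (a + b) x = act a x + act b x) \<and>
     (\<forall>a x y. act a (x + y) = act a x + act a y) \<and>
     (\<forall>a b x. act (a * b) x = act a (act b x)) \<and>
     (\<forall>x. act 1 x = x) \<and>
     (\<forall>a x y z. ip (act a x + y) z = a * ip x z + ip y z) \<and>
     (\<forall>x y. ip x y = invol (ip y x)) \<and>
     (\<forall>x. cpos (ip x x)) \<and>
     (\<forall>x. ip x x = 0 \<longrightarrow> x = 0) \<and>
     (\<forall>X. (\<forall>e>0. \<exists>N. \<forall>m\<ge>N. \<forall>n\<ge>N. hnorm ip (X m - X n) < e) \<longrightarrow>
          (\<exists>L. (\<lambda>n. hnorm ip (X n - L)) \<longlonglongrightarrow> 0))"

text \<open>Index sets are subsets of \<open>nat\<close> (finite or countable); series are summed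
  along the partial sums over \<open>J \<inter> {..<n}\<close> and converge in norm.\<close>

definition hsums :: "('h \<Rightarrow> 'h \<Rightarrow> 'a::cstar_algebra) \<Rightarrow> (nat \<Rightarrow> 'h::ab_group_add) \<Rightarrow> nat set \<Rightarrow> 'h \<Rightarrow> bool" where
  "hsums ip f J s \<longleftrightarrow> (\<lambda>n. hnorm ip ((\<Sum>j\<in>J \<inter> {..<n}. f j) - s)) \<longlonglongrightarrow> 0"

definition standard_frame ::
  "('a::cstar_algebra \<Rightarrow> 'h::ab_group_add \<Rightarrow> 'h) \<Rightarrow> ('h \<Rightarrow> 'h \<Rightarrow> 'a) \<Rightarrow> (nat \<Rightarrow> 'h) \<Rightarrow> nat set \<Rightarrow> bool" where
  "standard_frame act ip x J \<longleftrightarrow>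
     (\<exists>C D. C > 0 \<and> D > 0 \<and>
       (\<forall>v. \<exists>s. (\<lambda>n. \<Sum>j\<in>J \<inter> {..<n}. ip v (x j) * ip (x j) v) \<longlonglongrightarrow> s \<and>
              cle (scaleR C (ip v v)) s \<and> cle s (scaleR D (ip v v))))"

definition standard_alt_dual ::
  "('a::cstar_algebra \<Rightarrow> 'h::ab_group_add \<Rightarrow> 'h) \<Rightarrow> ('h \<Rightarrow> 'h \<Rightarrow> 'a) \<Rightarrow> (nat \<Rightarrow> 'h) \<Rightarrow> (nat \<Rightarrow> 'h) \<Rightarrow> nat set \<Rightarrow> bool" where
  "standard_alt_dual act ip x y J \<longleftrightarrow>
     standard_frame act ip y J \<and> (\<forall>v. hsums ip (\<lambda>j. act (ip v (y j)) (x j)) J v)"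

definition module_linear :: "('a::cstar_algebra \<Rightarrow> 'h::ab_group_add \<Rightarrow> 'h) \<Rightarrow> ('h \<Rightarrow> 'h) \<Rightarrow> bool" where
  "module_linear act T \<longleftrightarrow> (\<forall>a x y. T (act a x + y) = act a (T x) + T y)"

definition hbounded :: "('h \<Rightarrow> 'h \<Rightarrow> 'a::cstar_algebra) \<Rightarrow> ('h \<Rightarrow> 'h) \<Rightarrow> bool" where
  "hbounded ip T \<longleftrightarrow> (\<exists>K. \<forall>x. hnorm ip (T x) \<le> K * hnorm ip x)"

definition adjointable :: "('h \<Rightarrow> 'h \<Rightarrow> 'a::cstar_algebra) \<Rightarrow> ('h \<Rightarrow> 'h) \<Rightarrow> bool" where
  "adjointable ip T \<longleftrightarrow> (\<exists>S. \<forall>x y. ip (T x) y = ip x (S y))"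

definition good_operator ::
  "('a::cstar_algebra \<Rightarrow> 'h::ab_group_add \<Rightarrow> 'h) \<Rightarrow> ('h \<Rightarrow> 'h \<Rightarrow> 'a) \<Rightarrow> ('h \<Rightarrow> 'h) \<Rightarrow> bool" where
  "good_operator act ip T \<longleftrightarrow> module_linear act T \<and> hbounded ip T \<and> adjointable ip T"

definition invertible_operator ::
  "('a::cstar_algebra \<Rightarrow> 'h::ab_group_add \<Rightarrow> 'h) \<Rightarrow> ('h \<Rightarrow> 'h \<Rightarrow> 'a) \<Rightarrow> ('h \<Rightarrow> 'h) \<Rightarrow> bool" where
  "invertible_operator act ip T \<longleftrightarrow> good_operator act ip T \<and>
     (\<exists>S. good_operator act ip S \<and> T \<circ> S = id \<and> S \<circ> T = id)"

end

theory Submission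
  imports Defs "HOL-Computational_Algebra.Formal_Power_Series"
begin


lemma invol_zero [simp]: "invol (0::'a::cstar_algebra) = 0"
proof -
  have "invol (0::'a) = invol 0 + invol 0" by (metis add_0 invol_add)
  then show ?thesis by simp
qed

lemma invol_minus [simp]: "invol (- a) = - invol (a::'a::cstar_algebra)"
proof -
  have "invol a + invol (- a) = 0" using invol_add[of a "-a"] by simp
  then show ?thesis by (metis add_minus_cancel add.commute add_0)
qed

lemma invol_diff: "invol (a - b) = invol a - invol (b::'a::cstar_algebra)"
  using invol_add[of a "-b"] by simp

lemma invol_one [simp]: "invol (1::'a::cstar_algebra) = 1"
proof -
  have "invol (invol 1 * (1::'a)) = invol 1 * invol (invol 1)" by (rule invol_mult)
  then have "invol (invol (1::'a)) = invol 1" by (simp add: invol_invol)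
  then show ?thesis by (simp add: invol_invol)
qed

lemma invol_scaleR: "invol (scaleR r a) = scaleR r (invol (a::'a::cstar_algebra))"
  by (metis complex_cnj_complex_of_real invol_scaleC scaleC_of_real)

lemma invol_of_real [simp]: "invol (of_real r :: 'a::cstar_algebra) = of_real r"
  by (simp add: of_real_def invol_scaleR)

lemma invol_sum: "invol (sum f A) = sum (\<lambda>i. invol (f i)) (A::'b set)" for f :: "'b \<Rightarrow> 'a::cstar_algebra"
  by (induction A rule: infinite_finite_induct) (auto simp: invol_add)

lemma invol_power: "invol (a ^ n) = invol (a::'a::cstar_algebra) ^ n"
  by (induction n) (auto simp: invol_mult power_commutes)

lemma norm_invol [simp]: "norm (invol (a::'a::cstar_algebra)) = norm a"
proof -
  have le: "norm b \<le> norm (invol b)" for b :: 'a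
  proof (cases "b = 0")
    case False
    have "(norm b)^2 = norm (invol b * b)" by (simp add: cstar_identity)
    also have "\<dots> \<le> norm (invol b) * norm b" by (rule norm_mult_ineq)
    finally show ?thesis using False by (simp add: power2_eq_square)
  qed simp
  show ?thesis using le[of a] le[of "invol a"] by (simp add: invol_invol)
qed

lemma bounded_linear_invol: "bounded_linear (invol :: 'a::cstar_algebra \<Rightarrow> 'a)"
  by (rule bounded_linear_intro[where K=1]) (auto simp: invol_add invol_scaleR)

lemma norm_sa_sq: "invol h = h \<Longrightarrow> norm (h * h) = (norm (h::'a::cstar_algebra))^2"
  by (metis cstar_identity)

definition inv_ex :: "'a::cstar_algebra \<Rightarrow> bool" where
  "inv_ex a \<longleftrightarrow> (\<exists>b. a * b = 1 \<and> b * a = 1)"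

lemma neumann:
  fixes x :: "'a::cstar_algebra"
  assumes "norm x < 1"
  shows "inv_ex (1 - x)"
proof -
  have "summable (\<lambda>n. norm x ^ n)" using assms by (simp add: summable_geometric)
  then have sn: "summable (\<lambda>n. norm (x ^ n))"
    by (rule summable_comparison_test') (simp add: norm_power_ineq)
  then have s: "summable (\<lambda>n. x ^ n)" by (rule summable_norm_cancel)
  define S where "S = (\<Sum>n. x ^ n)"
  have h1: "(\<Sum>n. x ^ Suc n) = S - 1"
    using suminf_split_head[OF s] by (simp add: S_def)
  have "x * S = (\<Sum>n. x * x ^ n)" unfolding S_def by (rule suminf_mult[OF s, symmetric])
  also have "\<dots> = S - 1" using h1 by simp
  finally have a: "x * S = S - 1" .
  have "S * x = (\<Sum>n. x ^ n * x)" unfolding S_def using suminf_mult2[OF s, of x] by simp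
  also have "\<dots> = S - 1" using h1 by (simp add: power_commutes)
  finally have b: "S * x = S - 1" .
  have "(1 - x) * S = 1" by (simp add: left_diff_distrib a)
  moreover have "S * (1 - x) = 1" by (simp add: right_diff_distrib b)
  ultimately show ?thesis unfolding inv_ex_def by blast
qed

lemma neumann': "norm (1 - y) < 1 \<Longrightarrow> inv_ex (y::'a::cstar_algebra)"
  using neumann[of "1 - y"] by simp

lemma inv_ex_mult: "inv_ex a \<Longrightarrow> inv_ex b \<Longrightarrow> inv_ex (a * (b::'a::cstar_algebra))"
  unfolding inv_ex_def
proof (elim exE conjE)
  fix a' b' assume "a * a' = 1" "a' * a = 1" "b * b' = 1" "b' * b = 1"
  then have "(a * b) * (b' * a') = 1" "(b' * a') * (a * b) = 1"
    by (simp_all add: mult.assoc) (metis mult.assoc mult_1_left)+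
  then show "\<exists>c. a * b * c = 1 \<and> c * (a * b) = 1" by blast
qed

lemma inv_ex_commute_factor:
  fixes a b :: "'a::cstar_algebra"
  assumes "inv_ex (a * b)" "a * b = b * a"
  shows "inv_ex a"
proof -
  obtain w where w: "a * b * w = 1" "w * (a * b) = 1" using assms(1) unfolding inv_ex_def by blast
  have "w * a = a * w"
  proof -
    have "w * a = w * a * (a * b * w)" using w by simp
    also have "\<dots> = w * (a * (a * b)) * w" by (simp add: mult.assoc)
    also have "\<dots> = w * ((a * b) * a) * w" using assms(2) by (metis mult.assoc)
    also have "\<dots> = w * (a * b) * a * w" by (simp add: mult.assoc)
    also have "\<dots> = a * w" using w by simp
    finally show ?thesis .
  qed
  then have "(b * w) * a = 1" using w assms(2) by (metis mult.assoc)
  moreover have "a * (b * w) = 1" using w by (simp add: mult.assoc)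
  ultimately show ?thesis unfolding inv_ex_def by blast
qed

lemma of_real_comm: "of_real r * a = a * (of_real r :: 'a::real_normed_algebra_1)"
  by (simp add: of_real_def)

lemma jacobson:
  fixes x y :: "'a::cstar_algebra"
  assumes "inv_ex (of_real l + x * y)" "l \<noteq> 0"
  shows "inv_ex (of_real l + y * x)"
proof -
  obtain w where w: "(of_real l + x * y) * w = 1" "w * (of_real l + x * y) = 1"
    using assms(1) unfolding inv_ex_def by blast
  define u where "u = of_real (1/l) * (1 - y * w * x)"
  have e1: "(of_real l + y * x) * (1 - y * w * x) = of_real l"
  proof -
    have "(of_real l + y * x) * (1 - y * w * x) = of_real l + y * x - y * ((of_real l + x * y) * w) * x"
      by (simp add: algebra_simps of_real_comm mult.assoc)
    then show ?thesis using w by simp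
  qed
  have e2: "(1 - y * w * x) * (of_real l + y * x) = of_real l"
  proof -
    have "(1 - y * w * x) * (of_real l + y * x) = of_real l + y * x - y * (w * (of_real l + x * y)) * x"
      by (simp add: algebra_simps of_real_comm mult.assoc)
    then show ?thesis using w by simp
  qed
  have "(of_real l + y * x) * u = 1"
    unfolding u_def using e1 assms(2)
    by (metis (no_types, lifting) mult.assoc of_real_comm of_real_mult divide_self_if nonzero_divide_eq_eq of_real_1 mult_1_left)
  moreover have "u * (of_real l + y * x) = 1"
    unfolding u_def using e2 assms(2)
    by (metis (no_types, lifting) mult.assoc of_real_mult divide_self_if nonzero_divide_eq_eq of_real_1 mult_1_left)
  ultimately show ?thesis unfolding inv_ex_def by blast
qed



definition sqc :: "nat \<Rightarrow> real" where
  "sqc n = (-1)^n * ((1/2::real) gchoose n)"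

lemma sqc_0 [simp]: "sqc 0 = 1" by (simp add: sqc_def)

lemma gchoose_rec: "(a gchoose Suc k) = (a gchoose k) * (a - of_nat k) / of_nat (Suc k)"
  for a :: real
  using gbinomial_mult_1[of a k] by (simp add: field_simps del: of_nat_Suc)

lemma sqc_Suc: "sqc (Suc k) = sqc k * (of_nat k - 1/2) / of_nat (Suc k)"
  unfolding sqc_def gchoose_rec by (simp add: field_simps)

lemma sqc_nonpos: "n \<ge> 1 \<Longrightarrow> sqc n \<le> 0"
proof (induction n rule: dec_induct)
  case base
  then show ?case by (simp add: sqc_def)
next
  case (step k)
  then show ?case by (simp add: sqc_Suc divide_nonpos_pos mult_nonpos_nonneg)
qed

lemma gchoose_nonneg: "of_nat k - 1 \<le> a \<Longrightarrow> 0 \<le> (a gchoose k)" for a :: real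
  unfolding gbinomial_prod_rev
  by (intro divide_nonneg_pos prod_nonneg) auto

lemma sqc_partial_nonneg: "0 \<le> (\<Sum>k\<le>m. sqc k)"
proof -
  have "(\<Sum>k\<le>m. sqc k) = (\<Sum>k\<le>m. ((1/2::real) gchoose k) * (- 1) ^ k)"
    by (simp add: sqc_def mult.commute)
  also have "\<dots> = (- 1) ^ m * ((1/2 - 1::real) gchoose m)" by (rule gbinomial_sum_lower_neg)
  also have "\<dots> = ((of_nat m - (1/2 - 1) - 1) gchoose m)"
    by (subst gbinomial_negated_upper) (simp add: power_mult_distrib[symmetric])
  also have "\<dots> \<ge> 0" by (rule gchoose_nonneg) simp
  finally show ?thesis .
qed

lemma sqc_abs_partial: "(\<Sum>k\<le>m. \<bar>sqc k\<bar>) = 2 - (\<Sum>k\<le>m. sqc k)"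
proof (induction m)
  case 0 then show ?case by simp
next
  case (Suc m)
  have "\<bar>sqc (Suc m)\<bar> = - sqc (Suc m)" using sqc_nonpos[of "Suc m"] by simp
  then show ?case using Suc by simp
qed

lemma sqc_abs_summable: "summable (\<lambda>n. \<bar>sqc n\<bar>)"
  by (rule bounded_imp_summable[where B=2]) (auto simp: sqc_abs_partial sqc_partial_nonneg)

lemma sqc_abs_suminf: "(\<Sum>n. \<bar>sqc n\<bar>) \<le> 2"
proof -
  have "(\<lambda>m. \<Sum>k\<le>m. \<bar>sqc k\<bar>) \<longlonglongrightarrow> (\<Sum>n. \<bar>sqc n\<bar>)"
    using sqc_abs_summable summable_LIMSEQ' by blast
  then show ?thesis
    by (rule LIMSEQ_le_const2) (auto simp: sqc_abs_partial sqc_partial_nonneg)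
qed

lemma sqc_conv: "(\<Sum>i\<le>k. sqc i * sqc (k - i)) = (if k = 0 then 1 else if k = 1 then -1 else 0)"
proof -
  have "(\<Sum>i\<le>k. sqc i * sqc (k - i)) = (\<Sum>i\<le>k. (-1)^k * (((1/2::real) gchoose i) * ((1/2) gchoose (k - i))))"
    by (intro sum.cong refl) (simp add: sqc_def power_add[symmetric])
  also have "\<dots> = (-1)^k * (\<Sum>i=0..k. ((1/2::real) gchoose i) * ((1/2) gchoose (k - i)))"
    by (simp add: sum_distrib_left atMost_atLeast0)
  also have "\<dots> = (-1)^k * ((1/2 + 1/2::real) gchoose k)" by (simp only: gbinomial_Vandermonde)
  also have "\<dots> = (-1)^k * real (1 choose k)" by (simp add: binomial_gbinomial)
  also have "\<dots> = (if k = 0 then 1 else if k = 1 then -1 else 0)"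
    by (cases k) (auto simp: binomial_eq_0)
  finally show ?thesis .
qed

lemma commute_power: "y * x = x * y \<Longrightarrow> y * x ^ n = x ^ n * (y::'a::ring_1)"
  by (induction n) (simp_all add: mult.assoc[symmetric], metis mult.assoc)

lemma sqrt_core:
  fixes x :: "'a::cstar_algebra"
  assumes xs: "invol x = x" and xn: "norm x \<le> 1"
  shows "\<exists>r. invol r = r \<and> r * r = 1 - x \<and> norm (1 - r) \<le> 1 \<and> (\<forall>y. y * x = x * y \<longrightarrow> y * r = r * y)"
proof -
  define a where "a n = sqc n *\<^sub>R x ^ n" for n
  have na: "norm (a n) \<le> \<bar>sqc n\<bar>" for n
  proof -
    have "norm (x ^ n) \<le> norm x ^ n" by (rule norm_power_ineq)
    also have "\<dots> \<le> 1" using xn by (simp add: power_le_one)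
    finally show ?thesis unfolding a_def by (simp add: mult_left_le)
  qed
  have sa: "summable (\<lambda>n. norm (a n))"
    by (rule summable_comparison_test'[OF sqc_abs_summable]) (use na in auto)
  have s: "summable a" using sa by (rule summable_norm_cancel)
  define r where "r = suminf a"
  have "invol r = (\<Sum>n. invol (a n))"
    unfolding r_def by (rule bounded_linear.suminf[OF bounded_linear_invol s])
  also have "\<dots> = r" unfolding r_def a_def by (simp add: invol_scaleR invol_power xs)
  finally have rs: "invol r = r" .
  have cp: "(\<lambda>k. \<Sum>i\<le>k. a i * a (k - i)) sums (r * r)"
    unfolding r_def by (rule Cauchy_product_sums[OF sa sa])
  define f where "f k = (if k = 0 then 1 else if k = 1 then -1 else (0::real)) *\<^sub>R x ^ k" for k
  have "(\<Sum>i\<le>k. a i * a (k - i)) = f k" for k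
  proof -
    have "(\<Sum>i\<le>k. a i * a (k - i)) = (\<Sum>i\<le>k. (sqc i * sqc (k - i)) *\<^sub>R x ^ k)"
      by (intro sum.cong refl) (simp add: a_def power_add[symmetric])
    also have "\<dots> = (\<Sum>i\<le>k. sqc i * sqc (k - i)) *\<^sub>R x ^ k" by (simp add: scaleR_sum_left)
    also have "\<dots> = f k" by (simp only: sqc_conv f_def)
    finally show ?thesis .
  qed
  then have cp': "f sums (r * r)" using cp by simp
  have h0: "(\<lambda>k. f (Suc (Suc k))) sums 0" by (simp add: f_def)
  have h1: "(\<lambda>k. f (Suc k)) sums (0 + f 1)"
    using sums_Suc_iff[of "\<lambda>k. f (Suc k)" 0] h0 by simp
  have "f sums (0 + f 1 + f 0)" using sums_Suc_iff[of f "0 + f 1"] h1 by simp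
  then have "f sums (1 - x)" by (simp add: f_def)
  then have rr: "r * r = 1 - x" using cp' sums_unique2 by metis
  have a0: "a 0 = 1" by (simp add: a_def)
  have "r = (\<Sum>n. a (Suc n)) + 1" unfolding r_def using suminf_split_head[OF s] a0 by simp
  then have "1 - r = - (\<Sum>n. a (Suc n))" by simp
  then have "norm (1 - r) = norm (\<Sum>n. a (Suc n))" by simp
  also have "\<dots> \<le> (\<Sum>n. norm (a (Suc n)))"
    by (rule summable_norm) (use summable_Suc_iff[of "\<lambda>n. norm (a n)"] sa in simp)
  also have "\<dots> \<le> (\<Sum>n. \<bar>sqc (Suc n)\<bar>)"
    by (rule suminf_le) (use na summable_Suc_iff[of "\<lambda>n. norm (a n)"] sa summable_Suc_iff[of "\<lambda>n. \<bar>sqc n\<bar>"] sqc_abs_summable in auto)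
  also have "\<dots> = (\<Sum>n. \<bar>sqc n\<bar>) - 1"
    using suminf_split_head[OF sqc_abs_summable] by simp
  also have "\<dots> \<le> 1" using sqc_abs_suminf by simp
  finally have rn: "norm (1 - r) \<le> 1" .
  have rc: "y * r = r * y" if "y * x = x * y" for y
  proof -
    have "y * r = (\<Sum>n. y * a n)" unfolding r_def by (rule suminf_mult[OF s, symmetric])
    also have "\<dots> = (\<Sum>n. a n * y)"
      by (simp add: a_def commute_power[OF that])
    also have "\<dots> = r * y" unfolding r_def by (rule suminf_mult2[OF s, symmetric])
    finally show ?thesis .
  qed
  show ?thesis using rs rr rn rc by blast
qed



lemma scaleC_zero_right [simp]: "scaleC c (0::'a::cstar_algebra) = 0"
  by (metis add_0 add_cancel_right_right scaleC_add_right)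

lemma scaleC_minus_right: "scaleC c (- a) = - scaleC c (a::'a::cstar_algebra)"
  by (metis add.right_inverse add_eq_0_iff scaleC_add_right scaleC_zero_right)

lemma scaleC_diff_right: "scaleC c (a - b) = scaleC c a - scaleC c (b::'a::cstar_algebra)"
  by (metis diff_conv_add_uminus scaleC_add_right scaleC_minus_right)

lemma scaleC_ii: "scaleC \<i> (scaleC \<i> a) = - (a::'a::cstar_algebra)"
proof -
  have "scaleC \<i> (scaleC \<i> a) = scaleC (complex_of_real (-1)) a" by (simp add: scaleC_scaleC)
  also have "\<dots> = - a" using scaleC_of_real[of "-1" a] by simp
  finally show ?thesis .
qed

lemma scaleC_neg1: "scaleC (-1) a = - (a::'a::cstar_algebra)"
  using scaleC_of_real[of "-1" a] by simp

lemma scaleC_uminus_left: "scaleC (- c) a = - scaleC c (a::'a::cstar_algebra)"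
  using scaleC_scaleC[of "-1" c a] by (simp add: scaleC_neg1)

lemma invol_scaleC_ii: "invol (scaleC \<i> a) = - scaleC \<i> (invol (a::'a::cstar_algebra))"
proof -
  have "invol (scaleC \<i> a) = scaleC (- \<i>) (invol a)" by (simp add: invol_scaleC)
  then show ?thesis by (simp add: scaleC_uminus_left)
qed

lemma unitary_trick:
  fixes k m :: "'a::cstar_algebra"
  assumes ks: "invol k = k" and ms: "invol m = m" and km: "k * m = m * k"
  shows "(norm k)^2 \<le> norm (k * k + m * m)"
proof -
  define Z where "Z = k + scaleC \<i> m"
  have iZ: "invol Z = k - scaleC \<i> m" unfolding Z_def by (simp add: invol_add invol_scaleC_ii ks ms)
  have "invol Z * Z = (k - scaleC \<i> m) * (k + scaleC \<i> m)" using iZ Z_def by simp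
  also have "\<dots> = k * k + k * scaleC \<i> m - scaleC \<i> m * k - scaleC \<i> m * scaleC \<i> m"
    by (simp add: algebra_simps)
  also have "k * scaleC \<i> m = scaleC \<i> (k * m)" by (simp add: scaleC_mult_right)
  also have "scaleC \<i> m * k = scaleC \<i> (m * k)" by (simp add: scaleC_mult_left)
  also have "scaleC \<i> m * scaleC \<i> m = scaleC \<i> (scaleC \<i> (m * m))"
    by (metis scaleC_mult_left scaleC_mult_right)
  finally have "invol Z * Z = k * k + m * m" using km by (simp add: scaleC_ii)
  then have nZ: "(norm Z)^2 = norm (k * k + m * m)" by (metis cstar_identity)
  have "Z + invol Z = 2 *\<^sub>R k" by (subst iZ) (simp add: Z_def scaleR_2)
  then have "2 * norm k \<le> norm Z + norm (invol Z)"
    by (metis norm_scaleR abs_numeral norm_triangle_ineq)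
  then have "norm k \<le> norm Z" by simp
  then have "(norm k)^2 \<le> (norm Z)^2" by (simp add: power_mono)
  then show ?thesis using nZ by simp
qed

definition Np :: "'a::cstar_algebra \<Rightarrow> bool" where
  "Np h \<longleftrightarrow> invol h = h \<and> (\<exists>t\<ge>0. norm (of_real t - h) \<le> t)"

lemma Np_sa: "Np h \<Longrightarrow> invol h = h" by (simp add: Np_def)

lemma Np_add: "Np a \<Longrightarrow> Np b \<Longrightarrow> Np (a + b)"
  unfolding Np_def
proof (elim conjE exE)
  fix s t assume *: "invol a = a" "invol b = b" "0 \<le> s" "norm (of_real s - a) \<le> s"
    "0 \<le> t" "norm (of_real t - b) \<le> t"
  have "norm (of_real (s + t) - (a + b)) = norm ((of_real s - a) + (of_real t - b))"
    by (simp add: algebra_simps)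
  also have "\<dots> \<le> s + t" using * by (meson add_mono norm_triangle_ineq order_trans)
  finally show "invol (a + b) = a + b \<and> (\<exists>t\<ge>0. norm (of_real t - (a + b)) \<le> t)"
    using * by (auto simp: invol_add intro!: exI[of _ "s + t"])
qed

lemma Np_scale: "0 \<le> c \<Longrightarrow> Np a \<Longrightarrow> Np (c *\<^sub>R a)"
  unfolding Np_def
proof (elim conjE exE)
  fix t assume *: "0 \<le> c" "invol a = a" "0 \<le> t" "norm (of_real t - a) \<le> t"
  have "norm (of_real (c * t) - c *\<^sub>R a) = c * norm (of_real t - a)"
    by (metis * (1) abs_of_nonneg norm_scaleR of_real_mult scaleR_conv_of_real scaleR_right_diff_distrib)
  also have "\<dots> \<le> c * t" using * by (simp add: mult_left_mono)
  finally show "invol (c *\<^sub>R a) = c *\<^sub>R a \<and> (\<exists>t\<ge>0. norm (of_real t - c *\<^sub>R a) \<le> t)"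
    using * by (auto simp: invol_scaleR intro!: exI[of _ "c * t"])
qed

lemma Np_compl: "invol h = h \<Longrightarrow> norm h \<le> t \<Longrightarrow> Np (of_real t - h)"
  unfolding Np_def using norm_ge_zero[of h]
  by (auto simp: invol_diff intro!: exI[of _ t] simp del: norm_ge_zero)

lemma Np_of_real_nonneg: "Np (of_real c :: 'a::cstar_algebra) \<Longrightarrow> 0 \<le> c"
  unfolding Np_def
proof (elim conjE exE)
  fix t assume "0 \<le> t" "norm (of_real t - of_real c :: 'a) \<le> t"
  then have "\<bar>t - c\<bar> \<le> t" by (metis norm_of_real of_real_diff)
  then show "0 \<le> c" by linarith
qed

lemma sqrt_ex:
  fixes a :: "'a::cstar_algebra"
  assumes "Np a"
  shows "\<exists>r. Np r \<and> r * r = a \<and> (\<forall>y. y * a = a * y \<longrightarrow> y * r = r * y)"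
proof -
  obtain t where as: "invol a = a" and t: "0 \<le> t" "norm (of_real t - a) \<le> t"
    using assms unfolding Np_def by blast
  show ?thesis
  proof (cases "t = 0")
    case True
    then have "a = 0" using t by simp
    then show ?thesis by (auto simp: Np_def intro!: exI[of _ 0])
  next
    case False
    then have tp: "t > 0" using t by simp
    define x where "x = (1/t) *\<^sub>R (of_real t - a)"
    have xs: "invol x = x" unfolding x_def by (simp add: invol_scaleR invol_diff as)
    have xn: "norm x \<le> 1" unfolding x_def norm_scaleR using t tp by (simp add: field_simps)
    obtain r0 where r0: "invol r0 = r0" "r0 * r0 = 1 - x" "norm (1 - r0) \<le> 1"
      "\<forall>y. y * x = x * y \<longrightarrow> y * r0 = r0 * y"
      using sqrt_core[OF xs xn] by blast
    define r where "r = sqrt t *\<^sub>R r0"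
    have "r * r = t *\<^sub>R (1 - x)" unfolding r_def using r0(2) t by simp
    also have "\<dots> = a" unfolding x_def using tp
      by (simp add: scaleR_right_diff_distrib of_real_def)
    finally have rr: "r * r = a" .
    have "norm (of_real (sqrt t) - r) = sqrt t * norm (1 - r0)"
      unfolding r_def by (metis abs_of_nonneg norm_scaleR of_real_def real_sqrt_ge_zero scaleR_right_diff_distrib t(1))
    also have "\<dots> \<le> sqrt t" using r0(3) t by (simp add: mult_left_le)
    finally have "Np r" unfolding Np_def r_def using r0(1) t by (auto simp: invol_scaleR intro!: exI[of _ "sqrt t"])
    moreover have "y * r = r * y" if "y * a = a * y" for y
    proof -
      have "y * x = x * y" unfolding x_def using that by (simp add: algebra_simps of_real_comm)
      then show ?thesis using r0(4) unfolding r_def by simp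
    qed
    ultimately show ?thesis using rr by blast
  qed
qed



lemma Np_zero [simp]: "Np (0::'a::cstar_algebra)"
  by (auto simp: Np_def intro!: exI[of _ 0])

lemma Np_square: "invol k = k \<Longrightarrow> Np (k * (k::'a::cstar_algebra))"
proof (cases "k = 0")
  case False
  assume ks: "invol k = k"
  define n where "n = norm k"
  have np: "n > 0" using False by (simp add: n_def)
  define C where "C = (1/n) *\<^sub>R k"
  have Cs: "invol C = C" unfolding C_def by (simp add: invol_scaleR ks)
  have nC: "norm C = 1" unfolding C_def n_def using np n_def by simp
  define x where "x = C * C"
  have xs: "invol x = x" unfolding x_def by (simp add: invol_mult Cs)
  have xn: "norm x \<le> 1" unfolding x_def using norm_sa_sq[OF Cs] nC by simp
  obtain m where m: "invol m = m" "m * m = 1 - x" "\<forall>y. y * x = x * y \<longrightarrow> y * m = m * y"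
    using sqrt_core[OF xs xn] by blast
  have "C * x = x * C" unfolding x_def by (simp add: mult.assoc)
  then have mC: "m * C = C * m" using m(3) by simp
  have "(norm m)^2 \<le> norm (m * m + C * C)" by (rule unitary_trick[OF m(1) Cs mC])
  also have "m * m + C * C = 1" using m(2) x_def by simp
  finally have "norm (1 - x) \<le> 1" using m(2) norm_sa_sq[OF m(1)] by simp
  then have "Np x" unfolding Np_def using xs by (auto intro!: exI[of _ 1])
  moreover have "k * k = (n * n) *\<^sub>R x" unfolding x_def C_def using np by simp
  ultimately show ?thesis using Np_scale[of "n * n" x] np by simp
qed simp

lemma Np_mono:
  fixes h g :: "'a::cstar_algebra"
  assumes h: "Np h" and g: "Np g"
  shows "norm h \<le> norm (h + g)"
proof -
  define t where "t = norm (h + g)"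
  have hs: "invol h = h" and gs: "invol g = g" using h g by (simp_all add: Np_sa)
  have "Np (of_real t - (h + g))" using hs gs by (intro Np_compl) (simp_all add: invol_add t_def)
  then have "Np (of_real t - (h + g) + g)" using g by (rule Np_add)
  then have f: "Np (of_real t - h)" by simp
  obtain k where k: "Np k" "k * k = h" "\<forall>y. y * h = h * y \<longrightarrow> y * k = k * y"
    using sqrt_ex[OF h] by blast
  obtain m where m: "Np m" "m * m = of_real t - h"
    "\<forall>y. y * (of_real t - h) = (of_real t - h) * y \<longrightarrow> y * m = m * y"
    using sqrt_ex[OF f] by blast
  have "k * h = h * k" using k(2) by (metis mult.assoc)
  then have "k * (of_real t - h) = (of_real t - h) * k" by (simp add: algebra_simps of_real_comm)
  then have km: "k * m = m * k" using m(3) by simp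
  have "(norm k)^2 \<le> norm (k * k + m * m)"
    by (rule unitary_trick[OF Np_sa[OF k(1)] Np_sa[OF m(1)] km])
  also have "k * k + m * m = of_real t" using k(2) m(2) by simp
  finally have "(norm k)^2 \<le> t" by (simp add: t_def)
  moreover have "norm h = (norm k)^2" using k(2) norm_sa_sq[OF Np_sa[OF k(1)]] by simp
  ultimately show ?thesis by (simp add: t_def)
qed

lemma inv_ex_scaleR: "inv_ex y \<Longrightarrow> c \<noteq> 0 \<Longrightarrow> inv_ex (c *\<^sub>R (y::'a::cstar_algebra))"
  unfolding inv_ex_def
proof (elim exE conjE)
  fix b assume "y * b = 1" "b * y = 1" "c \<noteq> 0"
  then show "\<exists>b. c *\<^sub>R y * b = 1 \<and> b * c *\<^sub>R y = 1"
    by (intro exI[of _ "(1/c) *\<^sub>R b"]) simp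
qed

lemma inv_ex_sa_inverse:
  fixes a r :: "'a::cstar_algebra"
  assumes "invol a = a" "a * r = 1" "r * a = 1"
  shows "invol r = r"
proof -
  have "invol r * a = 1" using arg_cong[OF assms(2), of invol] assms(1) by (simp add: invol_mult)
  then have "invol r = invol r * (a * r)" using assms by simp
  also have "\<dots> = r" using \<open>invol r * a = 1\<close> by (simp add: mult.assoc[symmetric])
  finally show ?thesis .
qed

lemma edge:
  fixes g :: "'a::cstar_algebra"
  assumes g: "Np g" and ng: "norm g = 1"
  shows "\<not> inv_ex (1 - g)"
proof
  assume "inv_ex (1 - g)"
  then obtain R where R: "(1 - g) * R = 1" "R * (1 - g) = 1" unfolding inv_ex_def by blast
  have gs: "invol g = g" using g by (rule Np_sa)
  have Rs: "invol R = R" by (rule inv_ex_sa_inverse[OF _ R]) (simp add: invol_diff gs)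
  define M where "M = norm R"
  have f1: "Np (1 - g)" using Np_compl[OF gs, of 1] ng by simp
  obtain m where m: "Np m" "m * m = 1 - g" "\<forall>y. y * (1 - g) = (1 - g) * y \<longrightarrow> y * m = m * y"
    using sqrt_ex[OF f1] by blast
  have mR: "R * m = m * R" using m(3) R by simp
  have f2: "Np (of_real M - R)" using Np_compl[OF Rs, of M] by (simp add: M_def)
  obtain w where w: "Np w" "w * w = of_real M - R"
    "\<forall>y. y * (of_real M - R) = (of_real M - R) * y \<longrightarrow> y * w = w * y"
    using sqrt_ex[OF f2] by blast
  have "m * (of_real M - R) = (of_real M - R) * m" using mR by (simp add: algebra_simps of_real_comm)
  then have mw: "m * w = w * m" using w(3) by simp
  have ms: "invol m = m" and ws: "invol w = w" using m(1) w(1) by (simp_all add: Np_sa)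
  have "invol (m * w) = m * w" using mw by (simp add: invol_mult ms ws)
  then have "Np ((m * w) * (m * w))" by (rule Np_square)
  moreover have "(m * w) * (m * w) = m * (w * w) * m" using mw by (metis mult.assoc)
  moreover have "m * (of_real M - R) * m = of_real M * (m * m) - R * (m * m)"
  proof -
    have "m * (of_real M - R) * m = of_real M * (m * m) - m * R * m"
      by (simp add: algebra_simps of_real_comm)
    moreover have "m * R * m = R * (m * m)" using mR by (metis mult.assoc)
    ultimately show ?thesis by simp
  qed
  ultimately have "Np (of_real M * (1 - g) - 1)" using w(2) m(2) R by simp
  then have a1: "Np (of_real (M - 1) - M *\<^sub>R g)" by (simp add: algebra_simps scaleR_conv_of_real)
  have a2: "Np (M *\<^sub>R g)" using g by (intro Np_scale) (simp_all add: M_def)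
  have "norm (M *\<^sub>R g) \<le> norm (M *\<^sub>R g + (of_real (M - 1) - M *\<^sub>R g))" by (rule Np_mono[OF a2 a1])
  then have le: "M \<le> \<bar>M - 1\<bar>" using ng norm_of_real[of "M - 1", where 'a='a] by (simp add: M_def)
  have "Np (M *\<^sub>R g + (of_real (M - 1) - M *\<^sub>R g))" by (rule Np_add[OF a2 a1])
  then have "Np (of_real (M - 1) :: 'a)" by simp
  then have "0 \<le> M - 1" by (rule Np_of_real_nonneg)
  then show False using le by simp
qed

definition Pp :: "'a::cstar_algebra \<Rightarrow> bool" where
  "Pp g \<longleftrightarrow> (\<forall>l>0. inv_ex (g + of_real l))"

lemma Np_Pp: "Np g \<Longrightarrow> Pp (g::'a::cstar_algebra)"
  unfolding Pp_def
proof (intro allI impI)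
  fix l :: real assume g: "Np g" and l: "0 < l"
  obtain t where t: "0 \<le> t" "norm (of_real t - g) \<le> t" using g unfolding Np_def by blast
  define s where "s = t + l"
  have sp: "s > 0" using t l by (simp add: s_def)
  define y where "y = (1/s) *\<^sub>R (g + of_real l)"
  have e: "of_real s - (g + of_real l) = of_real t - g" by (simp add: s_def)
  have "1 - y = (1/s) *\<^sub>R (of_real s - (g + of_real l))"
    unfolding y_def using sp by (simp add: scaleR_right_diff_distrib of_real_def)
  then have "1 - y = (1/s) *\<^sub>R (of_real t - g)" using e by simp
  then have "norm (1 - y) = norm (of_real t - g) / s" using sp by simp
  also have "\<dots> \<le> t / s" using t sp by (simp add: divide_right_mono)
  also have "\<dots> < 1" using sp l by (simp add: s_def)
  finally have "inv_ex y" by (rule neumann')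
  then have "inv_ex (s *\<^sub>R y)" using sp by (simp add: inv_ex_scaleR)
  then show "inv_ex (g + of_real l)" using sp by (simp add: y_def)
qed

lemma Pp_Np:
  fixes g :: "'a::cstar_algebra"
  assumes gs: "invol g = g" and p: "Pp g"
  shows "Np g"
proof -
  define t where "t = norm g"
  define f where "f = of_real t - g"
  have f: "Np f" unfolding f_def t_def by (rule Np_compl[OF gs]) simp
  define \<mu> where "\<mu> = norm f"
  show ?thesis
  proof (cases "\<mu> \<le> t")
    case True
    then show ?thesis unfolding Np_def using gs by (auto simp: \<mu>_def f_def t_def intro!: exI[of _ t])
  next
    case False
    then have mp: "\<mu> > 0" using norm_ge_zero[of g] unfolding t_def by linarith
    define g' where "g' = (1/\<mu>) *\<^sub>R f"
    have "Np g'" unfolding g'_def using f mp by (intro Np_scale) simp_all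
    moreover have "norm g' = 1" unfolding g'_def using mp by (simp add: \<mu>_def)
    ultimately have ni: "\<not> inv_ex (1 - g')" by (rule edge)
    have e: "of_real \<mu> - f = g + of_real (\<mu> - t)" by (simp add: f_def)
    have "1 - g' = (1/\<mu>) *\<^sub>R (of_real \<mu> - f)"
      unfolding g'_def using mp by (simp add: scaleR_right_diff_distrib of_real_def)
    then have "1 - g' = (1/\<mu>) *\<^sub>R (g + of_real (\<mu> - t))" using e by simp
    moreover have "inv_ex (g + of_real (\<mu> - t))" using p False unfolding Pp_def
      by (metis diff_gt_0_iff_gt not_le)
    ultimately have "inv_ex (1 - g')" using mp by (simp add: inv_ex_scaleR)
    then show ?thesis using ni by simp
  qed
qed



lemma scaleC_ii_mult: "scaleC \<i> m * scaleC \<i> m = - (m * (m::'a::cstar_algebra))"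
proof -
  have "scaleC \<i> m * scaleC \<i> m = scaleC \<i> (scaleC \<i> (m * m))"
    by (metis scaleC_mult_left scaleC_mult_right)
  then show ?thesis by (simp add: scaleC_ii)
qed

lemma sa_zero_cube: "invol v = v \<Longrightarrow> v * v * v = 0 \<Longrightarrow> v = (0::'a::cstar_algebra)"
proof -
  assume vs: "invol v = v" and z: "v * v * v = 0"
  have vvs: "invol (v * v) = v * v" by (simp add: invol_mult vs)
  have "(v * v) * (v * v) = 0" using z by (metis mult.assoc mult_zero_left)
  then have "v * v = 0" using norm_sa_sq[OF vvs] by simp
  then show "v = 0" using norm_sa_sq[OF vs] by simp
qed

lemma Np_star: "Np (invol b * (b::'a::cstar_algebra))"
proof -
  define h where "h = invol b * b"
  have hs: "invol h = h" unfolding h_def by (simp add: invol_mult invol_invol)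
  obtain a where a: "Np a" "a * a = h * h" "\<forall>y. y * (h * h) = (h * h) * y \<longrightarrow> y * a = a * y"
    using sqrt_ex[OF Np_square[OF hs]] by blast
  have as: "invol a = a" using a(1) by (rule Np_sa)
  have ha: "h * a = a * h" using a(3) by (simp add: mult.assoc)
  define u where "u = a + h"
  define v where "v = a - h"
  have us: "invol u = u" and vs: "invol v = v"
    unfolding u_def v_def by (simp_all add: invol_add invol_diff as hs)
  have prod1: "(u + of_real l) * (v + of_real l) = (2 * l) *\<^sub>R (a + of_real (l / 2))" for l
  proof -
    have "(u + of_real l) * (v + of_real l) = (a * a - h * h) + (h * a - a * h) + (2 * l) *\<^sub>R a + (l * l) *\<^sub>R 1"
      unfolding u_def v_def of_real_def by (simp add: algebra_simps scaleR_2; (metis scaleR_add_left mult_2_right mult.commute)?)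
    also have "\<dots> = (2 * l) *\<^sub>R a + (l * l) *\<^sub>R 1" using a(2) ha by simp
    also have "\<dots> = (2 * l) *\<^sub>R (a + of_real (l / 2))"
      by (simp add: of_real_def scaleR_add_right)
    finally show ?thesis .
  qed
  have prod2: "(v + of_real l) * (u + of_real l) = (2 * l) *\<^sub>R (a + of_real (l / 2))" for l
  proof -
    have "(v + of_real l) * (u + of_real l) = (a * a - h * h) + (a * h - h * a) + (2 * l) *\<^sub>R a + (l * l) *\<^sub>R 1"
      unfolding u_def v_def of_real_def by (simp add: algebra_simps scaleR_2; (metis scaleR_add_left mult_2_right mult.commute)?)
    also have "\<dots> = (2 * l) *\<^sub>R a + (l * l) *\<^sub>R 1" using a(2) ha by simp
    also have "\<dots> = (2 * l) *\<^sub>R (a + of_real (l / 2))"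
      by (simp add: of_real_def scaleR_add_right)
    finally show ?thesis .
  qed
  have pinv: "inv_ex ((2 * l) *\<^sub>R (a + of_real (l / 2)))" if "l > 0" for l
    using Np_Pp[OF a(1)] that unfolding Pp_def by (intro inv_ex_scaleR) simp_all
  have "Pp u" unfolding Pp_def
  proof (intro allI impI)
    fix l :: real assume "l > 0"
    then show "inv_ex (u + of_real l)"
      using pinv[of l] prod1[of l] prod2[of l] inv_ex_commute_factor[of "u + of_real l" "v + of_real l"]
      by simp
  qed
  then have uN: "Np u" using us by (intro Pp_Np)
  have "Pp v" unfolding Pp_def
  proof (intro allI impI)
    fix l :: real assume "l > 0"
    then show "inv_ex (v + of_real l)"
      using pinv[of l] prod1[of l] prod2[of l] inv_ex_commute_factor[of "v + of_real l" "u + of_real l"]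
      by simp
  qed
  then have vN: "Np v" using vs by (intro Pp_Np)
  have vu: "v * u = 0" unfolding u_def v_def using a(2) ha by (simp add: algebra_simps)
  have huv: "2 *\<^sub>R h = u - v" unfolding u_def v_def by (simp add: scaleR_2)
  define c where "c = b * v"
  define c' where "c' = invol c"
  have cc: "2 *\<^sub>R (c' * c) = - (v * v * v)"
  proof -
    have "c' * c = v * h * v" unfolding c'_def c_def h_def by (simp add: invol_mult vs mult.assoc)
    then have "2 *\<^sub>R (c' * c) = v * (2 *\<^sub>R h) * v" by simp
    also have "\<dots> = v * u * v - v * v * v" unfolding huv by (simp add: algebra_simps)
    also have "v * u * v = 0" using vu by simp
    finally show ?thesis by simp
  qed
  obtain q where q: "Np q" "q * q = v" using sqrt_ex[OF vN] by blast
  have qs: "invol q = q" using q(1) by (rule Np_sa)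
  have "v * v * v = (q * q) * (q * q) * (q * q)" using q(2) by simp
  also have "\<dots> = (q * q * q) * (q * q * q)" by (simp add: mult.assoc)
  finally have "v * v * v = (q * q * q) * (q * q * q)" .
  moreover have "invol (q * q * q) = q * q * q" by (simp add: invol_mult qs mult.assoc)
  ultimately have v3: "Np (v * v * v)" using Np_square by metis
  have negc: "Np (- (c' * c))"
  proof -
    have "- (c' * c) = (1/2) *\<^sub>R (v * v * v)" using cc
      by (metis (no_types, lifting) minus_minus nonzero_divide_eq_eq scaleR_minus_right scaleR_one scaleR_scaleR zero_neq_numeral divide_self_if)
    then show ?thesis using Np_scale[OF _ v3, of "1/2"] by simp
  qed
  define re where "re = (1/2) *\<^sub>R (c + c')"
  define im where "im = (1/2) *\<^sub>R scaleC \<i> (c' - c)"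
  have res: "invol re = re" unfolding re_def c'_def by (simp add: invol_scaleR invol_add invol_invol add.commute)
  have ims: "invol im = im" unfolding im_def c'_def
    by (simp add: invol_scaleR invol_scaleC_ii invol_diff invol_invol scaleC_minus_right[symmetric])
  have "re * re + im * im = (1/4) *\<^sub>R ((c + c') * (c + c') - (c' - c) * (c' - c))"
    unfolding re_def im_def by (simp add: scaleC_ii_mult scaleR_right_diff_distrib)
  also have "(c + c') * (c + c') - (c' - c) * (c' - c) = 2 *\<^sub>R (c * c' + c' * c)"
    by (simp add: algebra_simps scaleR_2)
  finally have "re * re + im * im = (1/2) *\<^sub>R (c * c' + c' * c)" by simp
  moreover have "Np (re * re + im * im)" using Np_square[OF res] Np_square[OF ims] by (rule Np_add)
  ultimately have "Np ((1/2) *\<^sub>R (c * c' + c' * c))" by simp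
  then have "Np (c * c' + c' * c)" using Np_scale[of 2 "(1/2) *\<^sub>R (c * c' + c' * c)"] by simp
  then have "Np (c * c' + c' * c + - (c' * c))" using negc by (rule Np_add)
  then have "Np (c * c')" by simp
  then have p1: "Pp (c * c')" by (rule Np_Pp)
  have "Pp (c' * c)" unfolding Pp_def
  proof (intro allI impI)
    fix l :: real assume l: "l > 0"
    then have "inv_ex (of_real l + c * c')" using p1 unfolding Pp_def by (simp add: add.commute)
    then have "inv_ex (of_real l + c' * c)" using l jacobson[where l=l and x=c and y=c'] by simp
    then show "inv_ex (c' * c + of_real l)" by (simp add: add.commute)
  qed
  moreover have "invol (c' * c) = c' * c" unfolding c'_def by (simp add: invol_mult invol_invol)
  ultimately have "Np (c' * c)" by (intro Pp_Np)
  then have "norm (c' * c) \<le> norm (c' * c + - (c' * c))" using negc by (rule Np_mono)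
  then have "c' * c = 0" by simp
  then have "v * v * v = 0" using cc by simp
  then have "v = 0" by (rule sa_zero_cube[OF vs])
  then have "u = 2 *\<^sub>R h" using huv by simp
  then have "(1/2) *\<^sub>R u = h" by simp
  then have "h = (1/2) *\<^sub>R u" by simp
  then show ?thesis using Np_scale[OF _ uN, of "1/2"] by (simp add: h_def)
qed



context
  fixes act :: "'a::cstar_algebra \<Rightarrow> 'h::ab_group_add \<Rightarrow> 'h" and ip :: "'h \<Rightarrow> 'h \<Rightarrow> 'a"
  assumes HM: "hilbert_module act ip"
begin

lemmas HM' = HM[unfolded hilbert_module_def]
lemma hm_act1: "act 1 x = x"
  using HM'[THEN conjunct2, THEN conjunct2, THEN conjunct2, THEN conjunct1] by blast
lemma hm_lin: "ip (act a x + y) z = a * ip x z + ip y z"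
  using HM'[THEN conjunct2, THEN conjunct2, THEN conjunct2, THEN conjunct2, THEN conjunct1] by blast
lemma hm_sym: "ip x y = invol (ip y x)"
  using HM'[THEN conjunct2, THEN conjunct2, THEN conjunct2, THEN conjunct2, THEN conjunct2, THEN conjunct1] by blast
lemma hm_pos: "cpos (ip x x)"
  using HM'[THEN conjunct2, THEN conjunct2, THEN conjunct2, THEN conjunct2, THEN conjunct2, THEN conjunct2, THEN conjunct1] by blast
lemma hm_def: "ip x x = 0 \<Longrightarrow> x = 0"
  using HM'[THEN conjunct2, THEN conjunct2, THEN conjunct2, THEN conjunct2, THEN conjunct2, THEN conjunct2, THEN conjunct2, THEN conjunct1] by blast

lemma ip_add_left: "ip (x + y) z = ip x z + ip y z"
  using hm_lin[of 1 x y z] by (simp add: hm_act1)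

lemma ip_zero_left [simp]: "ip 0 z = 0"
  using ip_add_left[of 0 0 z] by simp

lemma ip_minus_left: "ip (- x) z = - ip x z"
proof -
  have "ip x z + ip (- x) z = 0" using ip_add_left[of x "- x" z] by simp
  then show ?thesis by (metis minus_unique)
qed

lemma ip_diff_left: "ip (x - y) z = ip x z - ip y z"
  using ip_add_left[of x "- y" z] by (simp add: ip_minus_left)

lemma ip_add_right: "ip z (x + y) = ip z x + ip z y"
  by (metis hm_sym ip_add_left invol_add)

lemma ip_diff_right: "ip z (x - y) = ip z x - ip z y"
  by (metis hm_sym ip_diff_left invol_diff)

lemma ip_Np: "Np (ip x x)"
  using hm_pos[of x] Np_star unfolding cpos_def by metis

lemma hnorm_sq: "(hnorm ip x)^2 = norm (ip x x)"
  by (simp add: hnorm_def)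

lemma hlim_unique:
  assumes a: "(\<lambda>n. hnorm ip (X n - v)) \<longlonglongrightarrow> 0" and b: "(\<lambda>n. hnorm ip (X n - w)) \<longlonglongrightarrow> 0"
  shows "v = w"
proof -
  define d where "d = w - v"
  have key: "norm (ip d d) \<le> 2 * (hnorm ip (X n - v))^2 + 2 * (hnorm ip (X n - w))^2" for n
  proof -
    define p where "p = X n - v"
    define q where "q = X n - w"
    have dpq: "d = p - q" unfolding d_def p_def q_def by simp
    have par: "ip d d + ip (p + q) (p + q) = (ip p p + ip p p) + (ip q q + ip q q)"
      unfolding dpq by (simp add: ip_add_left ip_add_right ip_diff_left ip_diff_right algebra_simps)
    have "norm (ip d d) \<le> norm (ip d d + ip (p + q) (p + q))" using ip_Np ip_Np by (rule Np_mono)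
    also have "\<dots> \<le> norm (ip p p + ip p p) + norm (ip q q + ip q q)" unfolding par by (rule norm_triangle_ineq)
    also have "\<dots> \<le> 2 * norm (ip p p) + 2 * norm (ip q q)"
      by (metis add_mono mult_2 norm_triangle_ineq)
    finally show ?thesis by (simp add: hnorm_sq p_def q_def)
  qed
  have "(\<lambda>n. 2 * (hnorm ip (X n - v))^2 + 2 * (hnorm ip (X n - w))^2) \<longlonglongrightarrow> 2 * 0^2 + 2 * 0^2"
    by (intro tendsto_intros a b)
  then have lim0: "(\<lambda>n. 2 * (hnorm ip (X n - v))^2 + 2 * (hnorm ip (X n - w))^2) \<longlonglongrightarrow> 0" by simp
  have "norm (ip d d) \<le> 0"
    by (rule LIMSEQ_le_const[OF lim0]) (use key in auto)
  then have "ip d d = 0" by simp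
  then have "d = 0" by (rule hm_def)
  then show ?thesis by (simp add: d_def)
qed

end

theorem proposition6p7:
  fixes act :: "'a::cstar_algebra \<Rightarrow> 'h::ab_group_add \<Rightarrow> 'h"
    and ip :: "'h \<Rightarrow> 'h \<Rightarrow> 'a"
    and x y z :: "nat \<Rightarrow> 'h"
    and J :: "nat set"
    and T :: "'h \<Rightarrow> 'h"
  assumes "hilbert_module act ip"
    and "standard_frame act ip x J"
    and "standard_alt_dual act ip x y J"
    and "standard_alt_dual act ip x z J"
    and "invertible_operator act ip T"
    and "\<forall>j\<in>J. z j = T (y j)"
  shows "T = id"
proof -
  note HM = assms(1)
  obtain S where S: "\<And>u w. ip (T u) w = ip u (S w)"
    using assms(5) unfolding invertible_operator_def good_operator_def adjointable_def by blast
  have ydual: "\<And>v. hsums ip (\<lambda>j. act (ip v (y j)) (x j)) J v"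
    using assms(3) unfolding standard_alt_dual_def by blast
  have zdual: "\<And>v. hsums ip (\<lambda>j. act (ip v (z j)) (x j)) J v"
    using assms(4) unfolding standard_alt_dual_def by blast
  have Sv: "S v = v" for v
  proof -
    define X where "X n = (\<Sum>j\<in>J \<inter> {..<n}. act (ip (S v) (y j)) (x j))" for n
    have 1: "(\<lambda>n. hnorm ip (X n - S v)) \<longlonglongrightarrow> 0"
      using ydual[of "S v"] unfolding hsums_def X_def .
    have eq: "ip v (z j) = ip (S v) (y j)" if "j \<in> J" for j
    proof -
      have "ip v (z j) = invol (ip (T (y j)) v)" using that assms(6) hm_sym[OF HM] by metis
      also have "\<dots> = invol (ip (y j) (S v))" by (simp add: S)
      also have "\<dots> = ip (S v) (y j)" using hm_sym[OF HM] by metis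
      finally show ?thesis .
    qed
    have "X n = (\<Sum>j\<in>J \<inter> {..<n}. act (ip v (z j)) (x j))" for n
      unfolding X_def by (rule sum.cong) (auto simp: eq)
    then have 2: "(\<lambda>n. hnorm ip (X n - v)) \<longlonglongrightarrow> 0"
      using zdual[of v] unfolding hsums_def by simp
    show ?thesis using hlim_unique[OF HM 1 2] .
  qed
  show ?thesis
  proof
    fix u
    have "ip (T u - u) w = 0" for w
      using S[of u w] Sv[of w] by (simp add: ip_diff_left[OF HM])
    then have "T u - u = 0" by (intro hm_def[OF HM]) simp
    then show "T u = id u" by simp
  qed
qed

end
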